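(* Let $d$ be odd and $a,b,c\ge1$ integers with $2a+2b+2c=d+1$. Let $P(x)=\sum_{j=0}^d a_jx^j$ be a real polynomial whose coefficients are all non-zero with signs given by $D(a,b,c)$; explicitly, $a_j>0$ for odd $j\geq 2b+2c+1$, $a_j<0$ for odd $j\leq 2b+2c-1$, $a_j>0$ for even $j\geq 2c$, and $a_j<0$ for even $j\leq 2c-2$. Let $P_o(x)=\sum_{\nu}a_{2\nu+1}x^{2\nu+1}$ and $P_e(x)=\sum_\nu a_{2\nu}x^{2\nu}$ be the odd and even parts of $P$, and suppose $P_o(1)=1$ and $P_e(1)=-1$ (so $P(1)=0$). Then $P^{(m)}(1)>0$ for every $m=1,2,\ldots,d$.
   Context: $D(a,b,c)$ denotes the sign pattern of length $d+1$ (listed from the coefficient of $x^d$ down to the constant term) consisting of $2a$ pluses, followed by $b$ pairs "$-,+$", followed by $2c$ minuses. $P^{(m)}$ denotes the $m$-th derivative of $P$. *)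

theory Defs
  imports "HOL-Computational_Algebra.Polynomial"
begin

definition odd_part_eval :: "real poly \<Rightarrow> real \<Rightarrow> real" where
  "odd_part_eval P x = (\<Sum>j\<le>degree P. if odd j then coeff P j * x ^ j else 0)"

definition even_part_eval :: "real poly \<Rightarrow> real \<Rightarrow> real" where
  "even_part_eval P x = (\<Sum>j\<le>degree P. if even j then coeff P j * x ^ j else 0)"

end

theory Submission
  imports Defs
begin

lemma poch_mono: "0 < (x::real) \<Longrightarrow> x \<le> y \<Longrightarrow> pochhammer x k \<le> pochhammer y k"
proof (induction k)
  case 0 then show ?case by simp
next
  case (Suc k)
  have "pochhammer x k * (x + real k) \<le> pochhammer y k * (y + real k)"
    using Suc less_imp_le[OF pochhammer_pos[of y k]] by (intro mult_mono) auto
  then show ?case by (simp add: pochhammer_Suc)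
qed

lemma poch_strict: assumes h: "0 < (x::real)" "x < y" and k: "0 < k" shows "pochhammer x k < pochhammer y k"
proof (cases k)
  case 0 then show ?thesis using k by simp
next
  case (Suc k')
  have "pochhammer x k' * (x + real k') < pochhammer y k' * (y + real k')"
    using h by (intro mult_le_less_imp_less poch_mono) (auto intro: pochhammer_pos)
  then show ?thesis using Suc by (simp add: pochhammer_Suc)
qed

definition FF :: "nat \<Rightarrow> nat \<Rightarrow> real" where
  "FF m j = (if m \<le> j then pochhammer (real (j - m) + 1) m else 0)"

lemma FF_nonneg: "FF m j \<ge> 0"
proof -
  have "0 < pochhammer (real (j - m) + 1) m" by (rule pochhammer_pos) simp
  then show ?thesis unfolding FF_def by (simp del: of_nat_diff)
qed

lemma FF_pos: "m \<le> j \<Longrightarrow> FF m j > 0"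
proof -
  assume "m \<le> j"
  have "0 < pochhammer (real (j - m) + 1) m" by (rule pochhammer_pos) simp
  then show ?thesis using \<open>m \<le> j\<close> unfolding FF_def by (simp del: of_nat_diff)
qed

lemma FF_mono: "j \<le> j' \<Longrightarrow> FF m j \<le> FF m j'"
  unfolding FF_def using FF_nonneg[of m j'] unfolding FF_def
  by (auto intro!: poch_mono)

lemma FF_strict: "j < j' \<Longrightarrow> m \<le> j' \<Longrightarrow> 0 < m \<Longrightarrow> FF m j < FF m j'"
proof (cases "m \<le> j")
  case True
  assume "j < j'" "m \<le> j'" "0 < m"
  then show ?thesis using True unfolding FF_def by (auto intro!: poch_strict)
next
  case False
  assume "j < j'" "m \<le> j'" "0 < m"
  then show ?thesis using False FF_pos[of m j'] unfolding FF_def by auto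
qed

lemma poly_higher_pderiv_1:
  fixes P :: "real poly"
  assumes "m \<le> degree P"
  shows "poly ((pderiv ^^ m) P) 1 = (\<Sum>j\<le>degree P. coeff P j * FF m j)"
proof -
  let ?d = "degree P"
  have "poly ((pderiv ^^ m) P) 1 = (\<Sum>n\<le>?d - m. coeff ((pderiv ^^ m) P) n)"
    by (simp add: poly_altdef degree_higher_pderiv)
  also have "\<dots> = (\<Sum>n\<in>{0..?d - m}. coeff P (n + m) * FF m (n + m))"
    by (intro sum.cong) (auto simp: coeff_higher_pderiv FF_def atLeast0AtMost add.commute)
  also have "\<dots> = (\<Sum>j\<in>{0+m..?d - m + m}. coeff P j * FF m j)"
    by (rule sum.shift_bounds_cl_nat_ivl[symmetric])
  also have "\<dots> = (\<Sum>j\<in>{m..?d}. coeff P j * FF m j)"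
    using assms by simp
  also have "\<dots> = (\<Sum>j\<le>?d. coeff P j * FF m j)"
  proof -
    have u: "{..?d} = {..<m} \<union> {m..?d}" using assms by auto
    have "(\<Sum>j\<le>?d. coeff P j * FF m j) = (\<Sum>j<m. coeff P j * FF m j) + (\<Sum>j\<in>{m..?d}. coeff P j * FF m j)"
      unfolding u by (rule sum.union_disjoint) auto
    moreover have "(\<Sum>j<m. coeff P j * FF m j) = 0" by (auto simp: FF_def)
    ultimately show ?thesis by simp
  qed
  finally show ?thesis .
qed

theorem lemma7:
  fixes P :: "real poly" and d a b c :: nat
  assumes "odd d" and "a \<ge> 1" and "b \<ge> 1" and "c \<ge> 1"
    and "2*a + 2*b + 2*c = d + 1"
    and "degree P = d"
    and "\<forall>j\<le>d. odd j \<and> j \<ge> 2*b + 2*c + 1 \<longrightarrow> coeff P j > 0"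
    and "\<forall>j\<le>d. odd j \<and> j + 1 \<le> 2*b + 2*c \<longrightarrow> coeff P j < 0"
    and "\<forall>j\<le>d. even j \<and> j \<ge> 2*c \<longrightarrow> coeff P j > 0"
    and "\<forall>j\<le>d. even j \<and> j + 2 \<le> 2*c \<longrightarrow> coeff P j < 0"
    and "odd_part_eval P 1 = 1"
    and "even_part_eval P 1 = -1"
  shows "\<forall>m\<in>{1..d}. poly ((pderiv ^^ m) P) 1 > 0"
proof
  fix m assume m: "m \<in> {1..d}"
  define T where "T = 2*b + 2*c"
  define t where "t = 2*c - 1"
  have S: "poly ((pderiv ^^ m) P) 1 = (\<Sum>j\<le>d. coeff P j * FF m j)"
    using m assms(6) poly_higher_pderiv_1[of m P] by auto
  have od: "(\<Sum>j\<le>d. if odd j then coeff P j else 0) = 1"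
    using assms(11,6) unfolding odd_part_eval_def by (simp cong: if_cong)
  have ev: "(\<Sum>j\<le>d. if even j then coeff P j else 0) = -1"
    using assms(12,6) unfolding even_part_eval_def by (simp cong: if_cong)
  show "poly ((pderiv ^^ m) P) 1 > 0"
  proof (cases "m \<le> T")
    case True
    have split: "(\<Sum>j\<le>d. coeff P j * FF m j) =
      (\<Sum>j\<le>d. if odd j then coeff P j * FF m j else 0) + (\<Sum>j\<le>d. if even j then coeff P j * FF m j else 0)"
      by (simp add: sum.distrib[symmetric]) (rule sum.cong, auto)
    have o1: "(\<Sum>j\<le>d. if odd j then coeff P j * FF m j else 0) - FF m T * (\<Sum>j\<le>d. if odd j then coeff P j else 0)
        = (\<Sum>j\<le>d. if odd j then coeff P j * (FF m j - FF m T) else 0)"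
      by (simp add: sum_distrib_left sum_subtractf[symmetric]) (rule sum.cong, auto simp: algebra_simps)
    have o2: "(\<Sum>j\<le>d. if odd j then coeff P j * (FF m j - FF m T) else 0) \<ge> 0"
    proof (intro sum_nonneg)
      fix j assume j: "j \<in> {..d}"
      show "0 \<le> (if odd j then coeff P j * (FF m j - FF m T) else 0)"
      proof (cases "odd j")
        case True
        have "j \<noteq> T" using True unfolding T_def by auto
        then consider "j < T" | "T < j" by linarith
        then show ?thesis
        proof cases
          case 1
          then have "coeff P j < 0" using assms(8) j True unfolding T_def by auto
          moreover have "FF m j \<le> FF m T" using 1 by (intro FF_mono) simp
          ultimately show ?thesis using True by (simp add: mult_nonpos_nonpos)
        next
          case 2
          then have "coeff P j > 0" using assms(7) j True unfolding T_def by auto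
          moreover have "FF m T \<le> FF m j" using 2 by (intro FF_mono) simp
          ultimately show ?thesis using True by simp
        qed
      qed simp
    qed
    have e1: "(\<Sum>j\<le>d. if even j then coeff P j * FF m j else 0) - FF m t * (\<Sum>j\<le>d. if even j then coeff P j else 0)
        = (\<Sum>j\<le>d. if even j then coeff P j * (FF m j - FF m t) else 0)"
      by (simp add: sum_distrib_left sum_subtractf[symmetric]) (rule sum.cong, auto simp: algebra_simps)
    have e2: "(\<Sum>j\<le>d. if even j then coeff P j * (FF m j - FF m t) else 0) \<ge> 0"
    proof (intro sum_nonneg)
      fix j assume j: "j \<in> {..d}"
      show "0 \<le> (if even j then coeff P j * (FF m j - FF m t) else 0)"
      proof (cases "even j")
        case True
        have "j \<noteq> t" using True assms(4) unfolding t_def by auto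
        then consider "j < t" | "t < j" by linarith
        then show ?thesis
        proof cases
          case 1
          then have "coeff P j < 0" using assms(10) j True unfolding t_def by auto
          moreover have "FF m j \<le> FF m t" using 1 by (intro FF_mono) simp
          ultimately show ?thesis using True by (simp add: mult_nonpos_nonpos)
        next
          case 2
          then have "coeff P j > 0" using assms(9) j True unfolding t_def by auto
          moreover have "FF m t \<le> FF m j" using 2 by (intro FF_mono) simp
          ultimately show ?thesis using True by simp
        qed
      qed simp
    qed
    have lt: "FF m t < FF m T"
      using True m assms(3,4) unfolding t_def T_def by (intro FF_strict) auto
    show ?thesis using S split o1[unfolded od] o2 e1[unfolded ev] e2 lt by linarith
  next
    case False
    have dd: "d \<in> {..d}" by simp
    have "(\<Sum>j\<le>d. coeff P j * FF m j) \<ge> coeff P d * FF m d"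
    proof (rule member_le_sum[OF dd])
      fix j assume j: "j \<in> {..d} - {d}"
      show "0 \<le> coeff P j * FF m j"
      proof (cases "m \<le> j")
        case True
        have "coeff P j > 0"
          using True False j assms(7,9) unfolding T_def by (cases "odd j") auto
        then show ?thesis using FF_nonneg[of m j] by simp
      next
        case False
        then show ?thesis by (simp add: FF_def)
      qed
    qed simp
    moreover have "coeff P d > 0" using assms(1,2,5,7) by auto
    moreover have "FF m d > 0" using m by (intro FF_pos) simp
    ultimately show ?thesis using S by (smt (verit) mult_pos_pos)
  qed
qed

end
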